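(* Let $\mu$ be a probability measure on $\mathbb{R}^d$, let $p>0$, $q>p$ with $\mu(|\cdot|^q)<\infty$, and let $\alpha\in(0,1)$. For $T\ge2$ define $$\mathcal K_\alpha(T):=\sum_{n\ge0}2^{pn}\sum_{\ell\ge0}2^{-p\ell}\sum_{F\in\mathcal P_\ell}\min\Big\{\mu(2^nF\cap B_n),\;T^{-1/2}\mu(2^nF\cap B_n)^\alpha\Big\},$$ and set $\gamma:=\max\{\alpha,1-\frac pd\}\in(0,1)$. Then there exists $C>0$ such that for all $T>2$, $$\mathcal K_\alpha(T)\le C\,T^{-\frac{1-\max\{\gamma,p/q\}}{2(1-\alpha)}}\Big(\mathbf 1_{\{\gamma q=p\}}\log T+\mathbf 1_{\{\gamma q\neq p\}}\Big)\Big(\mathbf 1_{\{p=(1-\alpha)d\}}\log T+\mathbf 1_{\{p\ne(1-\alpha)d\}}\Big).$$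
   Context: For $\ell\in\mathbb N=\{0,1,2,\dots\}$, $\mathcal P_\ell$ is the natural partition of $(-1,1]^d$ into $2^{d\ell}$ dyadic cubes of side length $2\cdot2^{-\ell}$. For $F\in\mathcal P_\ell$ and $n\in\mathbb N$, $2^nF:=\{2^nx:x\in F\}$. Set $B_0:=(-1,1]^d$ and $B_n:=(-2^n,2^n]^d\setminus(-2^{n-1},2^{n-1}]^d$ for $n\ge1$. $\mu(|\cdot|^q)=\int|x|^q\,\mu(\mathrm dx)$. $\mathbf 1_{\{\cdot\}}$ equals $1$ if the stated condition holds and $0$ otherwise. *)

theory Defs
  imports "HOL-Probability.Probability"
begin

definition half_open_cube :: "real \<Rightarrow> (real ^ 'd) set" where
  "half_open_cube r = {x. \<forall>i. - r < x $ i \<and> x $ i \<le> r}"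

definition dyadic_cube :: "nat \<Rightarrow> ('d \<Rightarrow> nat) \<Rightarrow> (real ^ 'd) set" where
  "dyadic_cube l k = {x. \<forall>i. -1 + 2 * real (k i) / 2 ^ l < x $ i
                          \<and> x $ i \<le> -1 + 2 * real (k i + 1) / 2 ^ l}"

definition dyadic_partition :: "nat \<Rightarrow> (real ^ 'd) set set" where
  "dyadic_partition l = dyadic_cube l ` {k. \<forall>i. k i < 2 ^ l}"

definition shell :: "nat \<Rightarrow> (real ^ 'd) set" where
  "shell n = (if n = 0 then half_open_cube 1
              else half_open_cube (2 ^ n) - half_open_cube (2 ^ (n - 1)))"

definition scale_set :: "nat \<Rightarrow> (real ^ 'd) set \<Rightarrow> (real ^ 'd) set" where
  "scale_set n F = (\<lambda>x. (2 ^ n) *\<^sub>R x) ` F"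

text \<open>K_alpha(T), as an extended nonnegative real (series of nonnegative terms).\<close>
definition K_alpha :: "(real ^ 'd) measure \<Rightarrow> real \<Rightarrow> real \<Rightarrow> real \<Rightarrow> ennreal" where
  "K_alpha \<mu> p \<alpha> T =
     (\<Sum>n. \<Sum>l. ennreal (2 powr (p * real n) * 2 powr (- p * real l) *
        (\<Sum>F\<in>dyadic_partition l.
           min (measure \<mu> (scale_set n F \<inter> shell n))
               (T powr (-1/2) * measure \<mu> (scale_set n F \<inter> shell n) powr \<alpha>))))"

end

theory Submission
  imports Defs
begin

lemma sum_min_split:
  fixes f g h :: "nat \<Rightarrow> real"
  assumes "summable h" "\<And>k. 0 \<le> f k" "\<And>k. k < L \<Longrightarrow> f k \<le> g k" "\<And>k. k \<ge> L \<Longrightarrow> f k \<le> h k"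
  shows "summable f" "suminf f \<le> sum g {..<L} + (\<Sum>k. h (k + L))"
proof -
  show sf: "summable f"
    by (rule summable_comparison_test'[OF assms(1), of L]) (use assms in auto)
  have "suminf f = (\<Sum>k. f (k + L)) + (\<Sum>i<L. f i)"
    by (rule suminf_split_initial_segment[OF sf])
  also have "(\<Sum>k. f (k + L)) \<le> (\<Sum>k. h (k + L))"
    by (rule suminf_le) (use assms sf in \<open>auto simp: summable_iff_shift\<close>)
  also have "(\<Sum>i<L. f i) \<le> sum g {..<L}"
    by (rule sum_mono) (use assms in auto)
  finally show "suminf f \<le> sum g {..<L} + (\<Sum>k. h (k + L))" by simp
qed

lemma geo_tail:
  fixes x A :: real assumes "0<x" "x<1"
  shows "(\<Sum>k. A * x ^ (k + L)) = A * x ^ L / (1 - x)"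
proof -
  have "(\<lambda>k. A * x ^ (k + L)) = (\<lambda>k. (A * x ^ L) * x ^ k)" by (simp add: power_add mult_ac)
  moreover have "(\<lambda>k. (A * x ^ L) * x ^ k) sums ((A * x ^ L) * (1 / (1 - x)))"
    by (intro sums_mult geometric_sums) (use assms in auto)
  ultimately show ?thesis by (simp add: sums_iff)
qed

lemma geo_head:
  fixes y B :: real assumes "1<y" "0 \<le> B"
  shows "(\<Sum>k<L. B * y ^ k) \<le> B * y ^ L / (y - 1)"
proof -
  have "(\<Sum>k<L. B * y ^ k) = B * ((y ^ L - 1) / (y - 1))"
    using assms by (simp add: sum_distrib_left[symmetric] sum_gp_strict field_simps)
  also have "\<dots> \<le> B * (y ^ L / (y - 1))"
    using assms by (intro mult_left_mono divide_right_mono) auto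
  finally show ?thesis by simp
qed

lemma pow_le_powr_lt1:
  fixes x r :: real assumes "0<x" "x<1" "r \<le> real L"
  shows "x ^ L \<le> exp (r * ln x)"
proof -
  have "x ^ L = exp (real L * ln x)" using assms by (simp add: exp_of_nat_mult)
  also have "\<dots> \<le> exp (r * ln x)" using assms by (intro exp_mono mult_right_mono_neg) auto
  finally show ?thesis .
qed

lemma pow_le_powr_gt1:
  fixes y r :: real assumes "1<y" "real L \<le> r + 1"
  shows "y ^ L \<le> y * exp (r * ln y)"
proof -
  have "y ^ L = exp (real L * ln y)" using assms by (simp add: exp_of_nat_mult)
  also have "\<dots> \<le> exp ((r + 1) * ln y)" using assms by (intro exp_mono mult_right_mono) auto
  also have "\<dots> = y * exp (r * ln y)" using assms by (simp add: distrib_right exp_add)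
  finally show ?thesis .
qed

lemma geo_min:
  fixes x y A B :: real
  assumes "0<x" "x<1" "1<y" "0<A" "0<B"
  shows "summable (\<lambda>k. min (A*x^k) (B*y^k))"
    "(\<Sum>k. min (A*x^k) (B*y^k)) \<le> (1/(1-x) + y/(y-1)) * exp ((ln y * ln A - ln x * ln B)/(ln y - ln x))"
proof -
  let ?f = "\<lambda>k. min (A*x^k) (B*y^k)"
  define V where "V = exp ((ln y * ln A - ln x * ln B)/(ln y - ln x))"
  have lx: "ln x < 0" and ly: "ln y > 0" using assms by auto
  have sh: "summable (\<lambda>k. A * x ^ k)" using assms by (intro summable_mult summable_geometric) auto
  have fnn: "\<And>k. 0 \<le> ?f k" using assms by auto
  show sf: "summable ?f"
    by (rule summable_comparison_test'[OF sh, of 0]) (use assms in auto)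
  show "suminf ?f \<le> (1/(1-x) + y/(y-1)) * V"
  proof (cases "A \<le> B")
    case True
    have "suminf ?f \<le> (\<Sum>k. A * x ^ k)"
      by (rule suminf_le) (use sf sh in auto)
    also have "\<dots> = A / (1 - x)" using geo_tail[OF assms(1,2), of A 0] by simp
    also have "A \<le> V"
    proof -
      have "ln A * (ln y - ln x) \<le> ln y * ln A - ln x * ln B"
        using True assms lx by (simp add: algebra_simps mult_left_mono_neg)
      hence "ln A \<le> (ln y * ln A - ln x * ln B)/(ln y - ln x)"
        using lx ly by (simp add: pos_le_divide_eq)
      hence "exp (ln A) \<le> V" unfolding V_def by simp
      thus ?thesis using assms by simp
    qed
    hence "A / (1 - x) \<le> V / (1 - x)" using assms by (intro divide_right_mono) auto
    also have "\<dots> \<le> (1/(1-x) + y/(y-1)) * V"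
    proof -
      have "0 \<le> y/(y-1) * V" using assms unfolding V_def by simp
      moreover have "(1/(1-x) + y/(y-1)) * V = V/(1-x) + y/(y-1) * V" by (simp add: distrib_right)
      ultimately show ?thesis by linarith
    qed
    finally show ?thesis .
  next
    case False
    define r where "r = ln (A/B) / (ln y - ln x)"
    have r0: "0 < r" unfolding r_def using False assms lx ly by (intro divide_pos_pos) auto
    define L where "L = nat \<lceil>r\<rceil>"
    have L1: "r \<le> real L" "real L \<le> r + 1" unfolding L_def using r0 by linarith+
    have "suminf ?f \<le> (\<Sum>k<L. B * y^k) + (\<Sum>k. A * x ^ (k + L))"
      by (rule sum_min_split(2)) (use assms sh in \<open>auto simp: summable_iff_shift\<close>)
    also have "(\<Sum>k. A * x ^ (k + L)) = A * x ^ L / (1 - x)" by (rule geo_tail) (use assms in auto)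
    also have "(\<Sum>k<L. B * y^k) \<le> B * y ^ L / (y - 1)" by (rule geo_head) (use assms in auto)
    also have "A * x ^ L \<le> A * exp (r * ln x)"
      using pow_le_powr_lt1[OF assms(1,2) L1(1)] assms by simp
    also have "B * y ^ L \<le> B * (y * exp (r * ln y))"
      using pow_le_powr_gt1[OF assms(3) L1(2)] assms by simp
    also have "A * exp (r * ln x) = V"
    proof -
      have "ln A + r * ln x = (ln y * ln A - ln x * ln B)/(ln y - ln x)"
        unfolding r_def using assms lx ly by (simp add: ln_div field_simps)
      thus ?thesis unfolding V_def using assms by (metis exp_add exp_ln)
    qed
    also have "B * exp (r * ln y) = V"
    proof -
      have "ln B + r * ln y = (ln y * ln A - ln x * ln B)/(ln y - ln x)"
        unfolding r_def using assms lx ly by (simp add: ln_div field_simps)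
      thus ?thesis unfolding V_def using assms by (metis exp_add exp_ln)
    qed
    have "B * (y * exp (r * ln y)) / (y - 1) + V / (1 - x) = (1/(1-x) + y/(y-1)) * V"
      using \<open>B * exp (r * ln y) = V\<close> by (simp add: field_simps)
    hence "B * (y * exp (r * ln y)) / (y - 1) + V / (1 - x) \<le> (1/(1-x) + y/(y-1)) * V" by simp
    moreover have "B * y ^ L / (y - 1) + A * x ^ L / (1 - x) \<le> B * (y * exp (r * ln y)) / (y - 1) + V / (1 - x)"
      using \<open>A * x ^ L \<le> A * exp (r * ln x)\<close> \<open>B * y ^ L \<le> B * (y * exp (r * ln y))\<close> \<open>A * exp (r * ln x) = V\<close> assms
      by (intro add_mono divide_right_mono) auto
    ultimately show ?thesis using \<open>suminf ?f \<le> (\<Sum>k<L. B * y^k) + (\<Sum>k. A * x ^ (k + L))\<close>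
       \<open>(\<Sum>k. A * x ^ (k + L)) = A * x ^ L / (1 - x)\<close> \<open>(\<Sum>k<L. B * y^k) \<le> B * y ^ L / (y - 1)\<close>
      by linarith
  qed
qed

lemma geo_min0:
  fixes x A B :: real
  assumes "0<x" "x<1" "0<A" "0<B"
  shows "summable (\<lambda>k. min (A*x^k) B)"
    "(\<Sum>k. min (A*x^k) B) \<le> B * (max 0 (ln (A/B) / (- ln x)) + 1 + 1/(1-x))"
proof -
  let ?f = "\<lambda>k. min (A*x^k) B"
  have lx: "ln x < 0" using assms by auto
  have sh: "summable (\<lambda>k. A * x ^ k)" using assms by (intro summable_mult summable_geometric) auto
  show sf: "summable ?f"
    by (rule summable_comparison_test'[OF sh, of 0]) (use assms in auto)
  have m0: "0 \<le> max 0 (ln (A/B) / (- ln x))" by simp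
  show "suminf ?f \<le> B * (max 0 (ln (A/B) / (- ln x)) + 1 + 1/(1-x))"
  proof (cases "A \<le> B")
    case True
    have "suminf ?f \<le> (\<Sum>k. A * x ^ k)"
      by (rule suminf_le) (use sf sh in auto)
    also have "\<dots> = A / (1 - x)" using geo_tail[OF assms(1,2), of A 0] by simp
    also have "\<dots> \<le> B / (1 - x)" using True assms by (intro divide_right_mono) auto
    also have "\<dots> \<le> B * (max 0 (ln (A/B) / (- ln x)) + 1 + 1/(1-x))"
    proof -
      have "0 \<le> B * (max 0 (ln (A/B) / (- ln x)) + 1)" using assms m0 by simp
      moreover have "B * (max 0 (ln (A/B) / (- ln x)) + 1 + 1/(1-x)) = B * (max 0 (ln (A/B) / (- ln x)) + 1) + B / (1 - x)"
        by (simp add: distrib_left)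
      ultimately show ?thesis by linarith
    qed
    finally show ?thesis .
  next
    case False
    define r where "r = ln (A/B) / (- ln x)"
    have r0: "0 < r" unfolding r_def using False assms lx by (intro divide_pos_pos) auto
    define L where "L = nat \<lceil>r\<rceil>"
    have L1: "r \<le> real L" "real L \<le> r + 1" unfolding L_def using r0 by linarith+
    have "suminf ?f \<le> (\<Sum>k<L. B) + (\<Sum>k. A * x ^ (k + L))"
      by (rule sum_min_split(2)) (use assms sh in \<open>auto simp: summable_iff_shift\<close>)
    also have "(\<Sum>k. A * x ^ (k + L)) = A * x ^ L / (1 - x)" by (rule geo_tail) (use assms in auto)
    also have "A * x ^ L \<le> A * exp (r * ln x)"
      using pow_le_powr_lt1[OF assms(1,2) L1(1)] assms by simp
    also have "A * exp (r * ln x) = B"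
    proof -
      have "ln A + r * ln x = ln B"
        unfolding r_def using assms lx by (simp add: ln_div field_simps)
      thus ?thesis using assms by (metis exp_add exp_ln)
    qed
    have "(\<Sum>k<L. B) = real L * B" by simp
    also have "\<dots> \<le> (r + 1) * B" using L1 assms by (intro mult_right_mono) auto
    finally have "suminf ?f \<le> (r + 1) * B + B / (1 - x)"
      using \<open>A * x ^ L \<le> A * exp (r * ln x)\<close> \<open>A * exp (r * ln x) = B\<close> assms
      by (smt (verit, best) divide_right_mono)
    thus ?thesis using r0 unfolding r_def by (simp add: field_simps)
  qed
qed

lemma two_powr_lt1: "a < 0 \<Longrightarrow> 2 powr a < (1::real)"
proof -
  assume "a < 0"
  hence "2 powr a < 2 powr (0::real)" by (intro powr_less_mono) auto
  thus ?thesis by simp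
qed

lemma two_powr_gt1: "0 < a \<Longrightarrow> 1 < 2 powr (a::real)"
proof -
  assume "0 < a"
  hence "2 powr 0 < 2 powr (a::real)" by (intro powr_less_mono) auto
  thus ?thesis by simp
qed

lemma div_le_C: "0 \<le> B \<Longrightarrow> 0 < 1 - z \<Longrightarrow> 1/(1-z) \<le> C \<Longrightarrow> B/(1-z) \<le> C*(B::real)"
proof -
  assume a: "0 \<le> B" "0 < 1 - z" "1/(1-z) \<le> C"
  have "B * (1/(1-z)) \<le> B * C" using a by (intro mult_left_mono) auto
  thus ?thesis by (simp add: mult.commute)
qed

lemma le_min_mult: "S \<le> K*a \<Longrightarrow> S \<le> K*b \<Longrightarrow> S \<le> K * min a (b::real)"
  by (simp add: min_def)

lemma pow2: "2 powr (a * real k) = (2 powr a) ^ k"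
  by (simp add: powr_realpow[symmetric] powr_powr)

lemma lsum_bound:
  fixes p d \<alpha> :: real
  assumes p: "0 < p" and d: "0 < d" and a0: "0 < \<alpha>" and a1: "\<alpha> < 1"
  shows "\<exists>C>0. \<forall>\<epsilon> M. 0 < \<epsilon> \<longrightarrow> \<epsilon> < 1 \<longrightarrow> 0 \<le> M \<longrightarrow> M \<le> 1 \<longrightarrow>
     summable (\<lambda>l. 2 powr (-p * real l) * min M (\<epsilon> * 2 powr (d * (1 - \<alpha>) * real l) * M powr \<alpha>)) \<and>
     (\<Sum>l. 2 powr (-p * real l) * min M (\<epsilon> * 2 powr (d * (1 - \<alpha>) * real l) * M powr \<alpha>))
       \<le> C * (if p = d * (1 - \<alpha>) then 1 + ln (1/\<epsilon>) else 1) *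
          min M (\<epsilon> powr ((1 - max \<alpha> (1 - p/d)) / (1 - \<alpha>)) * M powr (max \<alpha> (1 - p/d)))"
proof -
  define c where "c = d * (1 - \<alpha>)"
  have c0: "0 < c" unfolding c_def using d a1 by simp
  define x where "x = 2 powr (-p)"
  define y where "y = 2 powr (c - p)"
  have x0: "0 < x" "x < 1" unfolding x_def using p two_powr_lt1[of "-p"] by auto
  have y0: "0 < y" unfolding y_def by auto
  have lx: "ln x = - p * ln 2" unfolding x_def by (simp add: ln_powr)
  have ly: "ln y = (c - p) * ln 2" unfolding y_def by (simp add: ln_powr)
  have tm: "2 powr (-p * real l) * min M (\<epsilon> * 2 powr (c * real l) * M powr \<alpha>)
      = min (M * x ^ l) ((\<epsilon> * M powr \<alpha>) * y ^ l)" if "0 \<le> M" for \<epsilon> M and l :: nat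
  proof -
    have e1: "2 powr (-p * real l) * (2 powr (c * real l)) = y ^ l"
      unfolding y_def by (simp add: pow2[symmetric] powr_add[symmetric] algebra_simps)
    have e2: "2 powr (-p * real l) = x ^ l" unfolding x_def using pow2[of "-p" l] by simp
    have "0 \<le> x ^ l" using x0 by simp
    then have "x ^ l * min M (\<epsilon> * 2 powr (c * real l) * M powr \<alpha>)
       = min (M * x ^ l) ((\<epsilon> * M powr \<alpha>) * (x ^ l * 2 powr (c * real l)))"
      by (simp add: min_mult_distrib_left mult_ac)
    thus ?thesis using e1 e2 by simp
  qed
  have sx: "summable (\<lambda>l. M * x ^ l)" for M using x0 by (intro summable_mult summable_geometric) auto
  have sxv: "(\<Sum>l. M * x ^ l) = M / (1 - x)" for M using geo_tail[OF x0, of M 0] by simp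
  have gen: "\<exists>C>0. \<forall>\<epsilon> M. 0 < \<epsilon> \<longrightarrow> \<epsilon> < 1 \<longrightarrow> 0 < M \<longrightarrow> M \<le> 1 \<longrightarrow>
     (\<Sum>l. min (M * x ^ l) ((\<epsilon> * M powr \<alpha>) * y ^ l))
       \<le> C * (if p = c then 1 + ln (1/\<epsilon>) else 1) *
          min M (\<epsilon> powr ((1 - max \<alpha> (1 - p/d)) / (1 - \<alpha>)) * M powr (max \<alpha> (1 - p/d)))"
  proof (cases "p > c")
    case True
    have y1: "y < 1" unfolding y_def using True two_powr_lt1[of "c-p"] by simp
    have g: "max \<alpha> (1 - p/d) = \<alpha>" using True unfolding c_def using d
      by (simp add: field_simps)
    define C where "C = max (1/(1-x)) (1/(1-y))"
    have C0: "C > 0" unfolding C_def using x0 p by (simp add: less_max_iff_disj)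
    show ?thesis
    proof (intro exI[of _ C] conjI allI impI C0)
      fix \<epsilon> M :: real assume e: "0 < \<epsilon>" "\<epsilon> < 1" and M: "0 < M" "M \<le> 1"
      let ?B = "\<epsilon> * M powr \<alpha>"
      have B0: "0 \<le> ?B" using e by simp
      have sy: "summable (\<lambda>l. ?B * y ^ l)" using y0 y1 by (intro summable_mult summable_geometric) auto
      have s: "summable (\<lambda>l. min (M * x ^ l) (?B * y ^ l))"
        by (rule summable_comparison_test'[OF sx[of M], of 0]) (use M x0 y0 B0 in auto)
      have "(\<Sum>l. min (M * x ^ l) (?B * y ^ l)) \<le> M / (1 - x)"
        using suminf_le[OF _ s sx] sxv by auto
      also have "\<dots> \<le> C * M" using M x0 by (intro div_le_C) (auto simp: C_def)
      finally have 1: "(\<Sum>l. min (M * x ^ l) (?B * y ^ l)) \<le> C * M" .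
      have "(\<Sum>l. min (M * x ^ l) (?B * y ^ l)) \<le> ?B / (1 - y)"
        using suminf_le[OF _ s sy] geo_tail[OF y0 y1, of ?B 0] by auto
      also have "\<dots> \<le> C * ?B" using B0 y1 by (intro div_le_C) (auto simp: C_def)
      finally have 2: "(\<Sum>l. min (M * x ^ l) (?B * y ^ l)) \<le> C * ?B" .
      show "(\<Sum>l. min (M * x ^ l) (?B * y ^ l)) \<le> C * (if p = c then 1 + ln (1/\<epsilon>) else 1) *
          min M (\<epsilon> powr ((1 - max \<alpha> (1 - p/d)) / (1 - \<alpha>)) * M powr (max \<alpha> (1 - p/d)))"
        using le_min_mult[OF 1 2] True g a1 e by simp
    qed
  next
    case False
    show ?thesis
    proof (cases "p < c")
      case True
      have y1: "1 < y" unfolding y_def using True two_powr_gt1[of "c-p"] by simp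
      have g: "max \<alpha> (1 - p/d) = 1 - p/d" using True unfolding c_def using d
        by (simp add: field_simps)
      define C where "C = 1/(1-x) + y/(y-1)"
      have C0: "C > 0" unfolding C_def using x0 y1 by (simp add: add_pos_pos)
      show ?thesis
      proof (intro exI[of _ C] conjI allI impI C0)
        fix \<epsilon> M :: real assume e: "0 < \<epsilon>" "\<epsilon> < 1" and M: "0 < M" "M \<le> 1"
        let ?B = "\<epsilon> * M powr \<alpha>"
        have B0: "0 < ?B" using e M by simp
        have s: "summable (\<lambda>l. min (M * x ^ l) (?B * y ^ l))"
          by (rule summable_comparison_test'[OF sx[of M], of 0]) (use M x0 y0 B0 in auto)
        have "(\<Sum>l. min (M * x ^ l) (?B * y ^ l)) \<le> M / (1 - x)"
          using suminf_le[OF _ s sx] sxv by auto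
        also have "\<dots> \<le> C * M" using M x0 y1 by (intro div_le_C) (auto simp: C_def)
        finally have 1: "(\<Sum>l. min (M * x ^ l) (?B * y ^ l)) \<le> C * M" .
        have 2: "(\<Sum>l. min (M * x ^ l) (?B * y ^ l)) \<le> C * exp ((ln y * ln M - ln x * ln ?B)/(ln y - ln x))"
          unfolding C_def by (rule geo_min(2)) (use x0 y1 M B0 in auto)
        have "(ln y * ln M - ln x * ln ?B)/(ln y - ln x) = (p/d)/(1-\<alpha>) * ln \<epsilon> + (1 - p/d) * ln M"
          using e M d a1 c0 unfolding lx ly c_def by (simp add: ln_mult ln_powr field_simps)
        hence "exp ((ln y * ln M - ln x * ln ?B)/(ln y - ln x)) = \<epsilon> powr ((p/d)/(1-\<alpha>)) * M powr (1 - p/d)"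
          using e M by (simp add: powr_def exp_add mult_ac)
        moreover have "(1 - max \<alpha> (1 - p/d)) / (1 - \<alpha>) = (p/d)/(1-\<alpha>)" using g by simp
        ultimately have 3: "(\<Sum>l. min (M * x ^ l) (?B * y ^ l)) \<le> C * (\<epsilon> powr ((1 - max \<alpha> (1 - p/d)) / (1 - \<alpha>)) * M powr (max \<alpha> (1 - p/d)))"
          using 2 g by simp
        show "(\<Sum>l. min (M * x ^ l) (?B * y ^ l)) \<le> C * (if p = c then 1 + ln (1/\<epsilon>) else 1) *
            min M (\<epsilon> powr ((1 - max \<alpha> (1 - p/d)) / (1 - \<alpha>)) * M powr (max \<alpha> (1 - p/d)))"
          using le_min_mult[OF 1 3] True by simp
      qed
    next
      case False2: False
      have pc: "p = c" using False False2 by simp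
      have y1: "y = 1" unfolding y_def using pc by simp
      have g: "max \<alpha> (1 - p/d) = \<alpha>" using pc unfolding c_def using d
        by (simp add: field_simps)
      define C where "C = max (1/(p * ln 2)) (1 + 1/(1-x))"
      have C0: "C > 0" unfolding C_def using x0 p by (simp add: less_max_iff_disj)
      show ?thesis
      proof (intro exI[of _ C] conjI allI impI C0)
        fix \<epsilon> M :: real assume e: "0 < \<epsilon>" "\<epsilon> < 1" and M: "0 < M" "M \<le> 1"
        let ?B = "\<epsilon> * M powr \<alpha>"
        have B0: "0 < ?B" using e M by simp
        have le0: "0 < ln (1/\<epsilon>)" using e by (simp add: ln_div)
        have s: "summable (\<lambda>l. min (M * x ^ l) (?B * y ^ l))"
          by (rule summable_comparison_test'[OF sx[of M], of 0]) (use M x0 y0 B0 in auto)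
        have "(\<Sum>l. min (M * x ^ l) (?B * y ^ l)) \<le> M / (1 - x)"
          using suminf_le[OF _ s sx] sxv by auto
        also have "\<dots> \<le> C * M" using M x0 by (intro div_le_C) (auto simp: C_def)
        also have "\<dots> \<le> C * (1 + ln (1/\<epsilon>)) * M" using C0 M le0 by simp
        finally have 1: "(\<Sum>l. min (M * x ^ l) (?B * y ^ l)) \<le> C * (1 + ln (1/\<epsilon>)) * M" .
        have "(\<Sum>l. min (M * x ^ l) (?B * y ^ l)) \<le> ?B * (max 0 (ln (M/?B) / (- ln x)) + 1 + 1/(1-x))"
          using geo_min0(2)[OF x0 M(1) B0] by (simp add: y1)
        also have "max 0 (ln (M/?B) / (- ln x)) \<le> ln (1/\<epsilon>) / (p * ln 2)"
        proof -
          have "M / ?B = M powr (1 - \<alpha>) / \<epsilon>" using M e by (simp add: powr_diff)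
          also have "\<dots> \<le> 1 / \<epsilon>" using M e a1
            by (intro divide_right_mono) (auto intro: powr_le1)
          finally have "ln (M/?B) \<le> ln (1/\<epsilon>)" by (rule ln_mono) (use M B0 in simp)
          thus ?thesis unfolding lx using le0 p by (simp add: divide_right_mono)
        qed
        finally have "(\<Sum>l. min (M * x ^ l) (?B * y ^ l)) \<le> ?B * (ln (1/\<epsilon>) / (p * ln 2) + 1 + 1/(1-x))"
          using B0 by (smt (verit) mult_left_mono)
        also have "ln (1/\<epsilon>) / (p * ln 2) + 1 + 1/(1-x) \<le> C * (1 + ln (1/\<epsilon>))"
        proof -
          have "ln (1/\<epsilon>) / (p * ln 2) \<le> C * ln (1/\<epsilon>)" unfolding C_def using le0
            by (simp add: divide_inverse mult_right_mono mult.commute)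
          moreover have "1 + 1/(1-x) \<le> C" unfolding C_def by simp
          ultimately show ?thesis by (simp add: distrib_left)
        qed
        hence "?B * (ln (1/\<epsilon>) / (p * ln 2) + 1 + 1/(1-x)) \<le> ?B * (C * (1 + ln (1/\<epsilon>)))"
          using B0 by (intro mult_left_mono) auto
        finally have 2: "(\<Sum>l. min (M * x ^ l) (?B * y ^ l)) \<le> C * (1 + ln (1/\<epsilon>)) * ?B" by (simp add: mult_ac)
        show "(\<Sum>l. min (M * x ^ l) (?B * y ^ l)) \<le> C * (if p = c then 1 + ln (1/\<epsilon>) else 1) *
            min M (\<epsilon> powr ((1 - max \<alpha> (1 - p/d)) / (1 - \<alpha>)) * M powr (max \<alpha> (1 - p/d)))"
          using le_min_mult[OF 1 2] pc g a1 e by simp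
      qed
    qed
  qed
  then obtain C where C0: "C > 0" and CC: "\<And>\<epsilon> M. 0 < \<epsilon> \<Longrightarrow> \<epsilon> < 1 \<Longrightarrow> 0 < M \<Longrightarrow> M \<le> 1 \<Longrightarrow>
     (\<Sum>l. min (M * x ^ l) ((\<epsilon> * M powr \<alpha>) * y ^ l))
       \<le> C * (if p = c then 1 + ln (1/\<epsilon>) else 1) *
          min M (\<epsilon> powr ((1 - max \<alpha> (1 - p/d)) / (1 - \<alpha>)) * M powr (max \<alpha> (1 - p/d)))" by blast
  show ?thesis
  proof (intro exI[of _ C] conjI allI impI C0)
    fix \<epsilon> M :: real assume e: "0 < \<epsilon>" "\<epsilon> < 1" and M: "0 \<le> M" "M \<le> 1"
    have t: "(\<lambda>l. 2 powr (-p * real l) * min M (\<epsilon> * 2 powr (d * (1 - \<alpha>) * real l) * M powr \<alpha>))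
       = (\<lambda>l. min (M * x ^ l) ((\<epsilon> * M powr \<alpha>) * y ^ l))"
      using tm[OF M(1)] unfolding c_def by auto
    show "summable (\<lambda>l. 2 powr (-p * real l) * min M (\<epsilon> * 2 powr (d * (1 - \<alpha>) * real l) * M powr \<alpha>))"
      unfolding t
      by (rule summable_comparison_test'[OF sx[of M], of 0]) (use M x0 y0 e in auto)
    show "(\<Sum>l. 2 powr (-p * real l) * min M (\<epsilon> * 2 powr (d * (1 - \<alpha>) * real l) * M powr \<alpha>))
       \<le> C * (if p = d * (1 - \<alpha>) then 1 + ln (1/\<epsilon>) else 1) *
          min M (\<epsilon> powr ((1 - max \<alpha> (1 - p/d)) / (1 - \<alpha>)) * M powr (max \<alpha> (1 - p/d)))"
    proof (cases "M = 0")
      case True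
      thus ?thesis using a0 by simp
    next
      case False
      thus ?thesis unfolding t using CC[OF e, of M] M unfolding c_def by simp
    qed
  qed
qed

lemma nsum_bound:
  fixes p q \<gamma> K :: real
  assumes p: "0 < p" and q: "p < q" and g0: "0 < \<gamma>" and g1: "\<gamma> < 1" and K: "1 \<le> K"
  shows "\<exists>C>0. \<forall>E M. 0 < E \<longrightarrow> E < 1 \<longrightarrow> (\<forall>n. 0 \<le> M n \<and> M n \<le> K * 2 powr (-q * real n)) \<longrightarrow>
     summable (\<lambda>n. 2 powr (p * real n) * min (M n) (E * M n powr \<gamma>)) \<and>
     (\<Sum>n. 2 powr (p * real n) * min (M n) (E * M n powr \<gamma>))
       \<le> C * E powr ((1 - max \<gamma> (p/q)) / (1 - \<gamma>)) * (if \<gamma> * q = p then 1 + ln (1/E) else 1)"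
proof -
  define a where "a = 2 powr (p - q)"
  define b where "b = 2 powr (p - q * \<gamma>)"
  have a0: "0 < a" "a < 1" unfolding a_def using q two_powr_lt1[of "p-q"] by auto
  have b0: "0 < b" unfolding b_def by simp
  have la: "ln a = (p - q) * ln 2" unfolding a_def by (simp add: ln_powr)
  have lb: "ln b = (p - q * \<gamma>) * ln 2" unfolding b_def by (simp add: ln_powr)
  have K0: "0 < K" using K by simp
  have fb: "2 powr (p * real n) * min (M n) (E * M n powr \<gamma>) \<le> min (K * a ^ n) ((E * K powr \<gamma>) * b ^ n)"
    if E: "0 < E" and M: "\<forall>n. 0 \<le> M n \<and> M n \<le> K * 2 powr (-q * real n)" for E M n
  proof -
    let ?U = "K * 2 powr (-q * real n)"
    have M1: "0 \<le> M n" "M n \<le> ?U" using M by auto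
    have "min (M n) (E * M n powr \<gamma>) \<le> min ?U (E * ?U powr \<gamma>)"
      using M1 E g0 by (intro min.mono mult_left_mono powr_mono2) auto
    hence "2 powr (p * real n) * min (M n) (E * M n powr \<gamma>) \<le> 2 powr (p * real n) * min ?U (E * ?U powr \<gamma>)"
      by (intro mult_left_mono) auto
    also have "\<dots> = min (2 powr (p * real n) * ?U) (E * (2 powr (p * real n) * ?U powr \<gamma>))"
      by (simp add: min_mult_distrib_left mult_ac)
    also have "2 powr (p * real n) * ?U = K * a ^ n"
      unfolding a_def by (simp add: pow2[symmetric] powr_add[symmetric] algebra_simps)
    also have "2 powr (p * real n) * ?U powr \<gamma> = K powr \<gamma> * b ^ n"
      unfolding b_def using K0
      by (simp add: pow2[symmetric] powr_add[symmetric] powr_mult powr_powr algebra_simps)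
    finally show ?thesis by (simp add: mult_ac)
  qed
  have sa: "summable (\<lambda>n. K * a ^ n)" using a0 by (intro summable_mult summable_geometric) auto
  have sf: "summable (\<lambda>n. 2 powr (p * real n) * min (M n) (E * M n powr \<gamma>))"
    if E: "0 < E" and M: "\<forall>n. 0 \<le> M n \<and> M n \<le> K * 2 powr (-q * real n)" for E M
    by (rule summable_comparison_test'[OF sa, of 0])
       (use fb[OF E M] M E in \<open>auto intro: order.trans[OF _ min.cobounded1]\<close>)
  have main: "\<exists>C>0. \<forall>E M. 0 < E \<longrightarrow> E < 1 \<longrightarrow> (\<forall>n. 0 \<le> M n \<and> M n \<le> K * 2 powr (-q * real n)) \<longrightarrow>
     (\<Sum>n. min (K * a ^ n) ((E * K powr \<gamma>) * b ^ n))
       \<le> C * E powr ((1 - max \<gamma> (p/q)) / (1 - \<gamma>)) * (if \<gamma> * q = p then 1 + ln (1/E) else 1)"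
  proof (cases "p < q * \<gamma>")
    case True
    have b1: "b < 1" unfolding b_def using True two_powr_lt1[of "p - q*\<gamma>"] by simp
    have mx: "max \<gamma> (p/q) = \<gamma>" using True p q by (simp add: field_simps)
    have ne: "\<gamma> * q \<noteq> p" using True by (simp add: mult.commute)
    define C where "C = K powr \<gamma> / (1 - b)"
    have C0: "C > 0" unfolding C_def using b1 K0 by simp
    show ?thesis
    proof (intro exI[of _ C] conjI allI impI C0)
      fix E :: real and M :: "nat \<Rightarrow> real" assume E: "0 < E" "E < 1"
      let ?B = "E * K powr \<gamma>"
      have sb: "summable (\<lambda>n. ?B * b ^ n)" using b0 b1 by (intro summable_mult summable_geometric) auto
      have s: "summable (\<lambda>n. min (K * a ^ n) (?B * b ^ n))"
        by (rule summable_comparison_test'[OF sa, of 0]) (use a0 b0 E K0 in auto)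
      have "(\<Sum>n. min (K * a ^ n) (?B * b ^ n)) \<le> (\<Sum>n. ?B * b ^ n)"
        by (rule suminf_le[OF _ s sb]) auto
      also have "\<dots> = ?B / (1 - b)" using geo_tail[OF b0 b1, of ?B 0] by simp
      also have "\<dots> = C * E" unfolding C_def by simp
      finally show "(\<Sum>n. min (K * a ^ n) (?B * b ^ n))
         \<le> C * E powr ((1 - max \<gamma> (p/q)) / (1 - \<gamma>)) * (if \<gamma> * q = p then 1 + ln (1/E) else 1)"
        using mx ne g1 E by simp
    qed
  next
    case False
    show ?thesis
    proof (cases "q * \<gamma> < p")
      case True
      have b1: "1 < b" unfolding b_def using True two_powr_gt1[of "p - q*\<gamma>"] by simp
      have mx: "max \<gamma> (p/q) = p/q" using True p q by (simp add: field_simps)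
      have ne: "\<gamma> * q \<noteq> p" using True by (simp add: mult.commute)
      define C where "C = (1/(1-a) + b/(b-1)) * K powr (p/q)"
      have C0: "C > 0" unfolding C_def using a0 b1 K0 by (simp add: add_pos_pos)
      show ?thesis
      proof (intro exI[of _ C] conjI allI impI C0)
        fix E :: real and M :: "nat \<Rightarrow> real" assume E: "0 < E" "E < 1"
        let ?B = "E * K powr \<gamma>"
        have B0: "0 < ?B" using E K0 by simp
        have 2: "(\<Sum>n. min (K * a ^ n) (?B * b ^ n)) \<le> (1/(1-a) + b/(b-1)) * exp ((ln b * ln K - ln a * ln ?B)/(ln b - ln a))"
          by (rule geo_min(2)) (use a0 b1 K0 B0 in auto)
        have "(ln b * ln K - ln a * ln ?B)/(ln b - ln a) = (p/q) * ln K + ((1 - p/q)/(1 - \<gamma>)) * ln E"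
          using E K0 g1 q p unfolding la lb by (simp add: ln_mult ln_powr field_simps)
        hence "exp ((ln b * ln K - ln a * ln ?B)/(ln b - ln a)) = K powr (p/q) * E powr ((1 - p/q)/(1 - \<gamma>))"
          using E K0 by (simp add: powr_def exp_add mult_ac)
        with 2 show "(\<Sum>n. min (K * a ^ n) (?B * b ^ n))
           \<le> C * E powr ((1 - max \<gamma> (p/q)) / (1 - \<gamma>)) * (if \<gamma> * q = p then 1 + ln (1/E) else 1)"
          using mx ne unfolding C_def by (simp add: mult_ac)
      qed
    next
      case False2: False
      have eq: "\<gamma> * q = p" using False False2 by (simp add: mult.commute)
      have b1: "b = 1" unfolding b_def using eq by (simp add: mult.commute)
      have mx: "max \<gamma> (p/q) = \<gamma>" using eq p q by (simp add: field_simps)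
      define D where "D = max (1/((q-p) * ln 2)) ((1-\<gamma>) * ln K / ((q-p) * ln 2) + 1 + 1/(1-a))"
      define C where "C = K powr \<gamma> * D"
      have D0: "D > 0" unfolding D_def using q by (simp add: less_max_iff_disj)
      have C0: "C > 0" unfolding C_def using D0 K0 by simp
      show ?thesis
      proof (intro exI[of _ C] conjI allI impI C0)
        fix E :: real and M :: "nat \<Rightarrow> real" assume E: "0 < E" "E < 1"
        let ?B = "E * K powr \<gamma>"
        have B0: "0 < ?B" using E K0 by simp
        have le0: "0 < ln (1/E)" using E by (simp add: ln_div)
        have lK: "0 \<le> ln K" using K by simp
        have "(\<Sum>n. min (K * a ^ n) (?B * b ^ n)) \<le> ?B * (max 0 (ln (K/?B) / (- ln a)) + 1 + 1/(1-a))"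
          using geo_min0(2)[OF a0 K0 B0] by (simp add: b1)
        also have "max 0 (ln (K/?B) / (- ln a)) \<le> ((1-\<gamma>) * ln K + ln (1/E)) / ((q-p) * ln 2)"
        proof -
          have "ln (K/?B) = (1-\<gamma>) * ln K + ln (1/E)"
            using E K0 by (simp add: ln_div ln_mult ln_powr algebra_simps)
          moreover have "0 \<le> (1-\<gamma>) * ln K + ln (1/E)" using lK le0 g1 by simp
          ultimately show ?thesis unfolding la using q by (simp add: divide_right_mono algebra_simps)
        qed
        finally have "(\<Sum>n. min (K * a ^ n) (?B * b ^ n)) \<le> ?B * (((1-\<gamma>) * ln K + ln (1/E)) / ((q-p) * ln 2) + 1 + 1/(1-a))"
          using B0 by (smt (verit) mult_left_mono)
        also have "((1-\<gamma>) * ln K + ln (1/E)) / ((q-p) * ln 2) + 1 + 1/(1-a) \<le> D * (1 + ln (1/E))"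
        proof -
          have "ln (1/E) / ((q-p) * ln 2) \<le> D * ln (1/E)" unfolding D_def using le0
            by (simp add: divide_inverse mult_right_mono mult.commute)
          moreover have "(1-\<gamma>) * ln K / ((q-p) * ln 2) + 1 + 1/(1-a) \<le> D" unfolding D_def by simp
          ultimately show ?thesis by (simp add: distrib_left add_divide_distrib)
        qed
        hence "?B * (((1-\<gamma>) * ln K + ln (1/E)) / ((q-p) * ln 2) + 1 + 1/(1-a)) \<le> ?B * (D * (1 + ln (1/E)))"
          using B0 by (intro mult_left_mono) auto
        finally show "(\<Sum>n. min (K * a ^ n) (?B * b ^ n))
           \<le> C * E powr ((1 - max \<gamma> (p/q)) / (1 - \<gamma>)) * (if \<gamma> * q = p then 1 + ln (1/E) else 1)"
          using mx eq g1 E unfolding C_def by (simp add: mult_ac)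
      qed
    qed
  qed
  then obtain C where C0: "C > 0" and CC: "\<And>E M. 0 < E \<Longrightarrow> E < 1 \<Longrightarrow> (\<forall>n. 0 \<le> M n \<and> M n \<le> K * 2 powr (-q * real n)) \<Longrightarrow>
     (\<Sum>n. min (K * a ^ n) ((E * K powr \<gamma>) * b ^ n))
       \<le> C * E powr ((1 - max \<gamma> (p/q)) / (1 - \<gamma>)) * (if \<gamma> * q = p then 1 + ln (1/E) else 1)" by blast
  show ?thesis
  proof (intro exI[of _ C] conjI allI impI C0)
    fix E :: real and M :: "nat \<Rightarrow> real"
    assume E: "0 < E" "E < 1" and M: "\<forall>n. 0 \<le> M n \<and> M n \<le> K * 2 powr (-q * real n)"
    show s1: "summable (\<lambda>n. 2 powr (p * real n) * min (M n) (E * M n powr \<gamma>))" using sf[OF E(1) M] .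
    have s2: "summable (\<lambda>n. min (K * a ^ n) ((E * K powr \<gamma>) * b ^ n))"
      by (rule summable_comparison_test'[OF sa, of 0]) (use a0 b0 E K0 in auto)
    have "(\<Sum>n. 2 powr (p * real n) * min (M n) (E * M n powr \<gamma>)) \<le> (\<Sum>n. min (K * a ^ n) ((E * K powr \<gamma>) * b ^ n))"
      by (rule suminf_le[OF _ s1 s2]) (use fb[OF E(1) M] in auto)
    also have "\<dots> \<le> C * E powr ((1 - max \<gamma> (p/q)) / (1 - \<gamma>)) * (if \<gamma> * q = p then 1 + ln (1/E) else 1)"
      by (rule CC[OF E M])
    finally show "(\<Sum>n. 2 powr (p * real n) * min (M n) (E * M n powr \<gamma>))
       \<le> C * E powr ((1 - max \<gamma> (p/q)) / (1 - \<gamma>)) * (if \<gamma> * q = p then 1 + ln (1/E) else 1)" .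
  qed
qed

lemma half_open_cube_borel: "half_open_cube r \<in> sets borel"
  unfolding half_open_cube_def by measurable

lemma shell_borel: "shell n \<in> sets borel"
  unfolding shell_def using half_open_cube_borel by auto

lemma dyadic_cube_borel: "dyadic_cube l k \<in> sets borel"
  unfolding dyadic_cube_def by measurable

lemma scale_set_vimage: "scale_set n F = (\<lambda>x. (1/2^n) *\<^sub>R x) -` F"
proof (intro set_eqI iffI)
  fix y assume "y \<in> scale_set n F"
  then obtain x where "x \<in> F" "y = (2^n) *\<^sub>R x" unfolding scale_set_def by auto
  thus "y \<in> (\<lambda>x. (1/2^n) *\<^sub>R x) -` F" by simp
next
  fix y assume "y \<in> (\<lambda>x. (1/2^n) *\<^sub>R x) -` F"
  hence "(1/2^n) *\<^sub>R y \<in> F" by simp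
  moreover have "y = (2^n) *\<^sub>R ((1/2^n) *\<^sub>R y)" by simp
  ultimately show "y \<in> scale_set n F" unfolding scale_set_def by blast
qed

lemma scale_set_borel:
  fixes F :: "(real^'d) set"
  shows "F \<in> sets borel \<Longrightarrow> scale_set n F \<in> sets borel"
  using measurable_sets_borel[of "\<lambda>x::real^'d. (1/2^n) *\<^sub>R x" borel F]
  by (simp add: scale_set_vimage)

lemma dyadic_cube_disj:
  assumes "k i \<noteq> k' i"
  shows "dyadic_cube l k \<inter> dyadic_cube l k' = {}"
proof (rule ccontr)
  assume "dyadic_cube l k \<inter> dyadic_cube l k' \<noteq> {}"
  then obtain x where x: "x \<in> dyadic_cube l k" "x \<in> dyadic_cube l k'" by blast
  have h: "-1 + 2 * real (a i) / 2 ^ l < x $ i \<and> x $ i \<le> -1 + 2 * real (a i + 1) / 2 ^ l"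
    if "x \<in> dyadic_cube l a" for a using that unfolding dyadic_cube_def by blast
  have mono: "2 * real (a + 1) / 2 ^ l \<le> 2 * real b / 2 ^ l" if "a < b" for a b :: nat
    using that by (intro divide_right_mono) auto
  show False
  proof (cases "k i < k' i")
    case True
    thus False using h[OF x(1)] h[OF x(2)] mono[OF True] by linarith
  next
    case False
    hence "k' i < k i" using assms by simp
    thus False using h[OF x(1)] h[OF x(2)] mono[of "k' i" "k i"] by linarith
  qed
qed

lemma dyadic_partition_disj:
  assumes "F \<in> dyadic_partition l" "G \<in> dyadic_partition l" "F \<noteq> G"
  shows "F \<inter> G = {}"
proof -
  obtain k k' where "F = dyadic_cube l k" "G = dyadic_cube l k'"
    using assms unfolding dyadic_partition_def by auto
  moreover from this assms(3) obtain i where "k i \<noteq> k' i" by (metis ext)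
  ultimately show ?thesis using dyadic_cube_disj by blast
qed

lemma dyadic_index_set: "{k::'d \<Rightarrow> nat. \<forall>i. k i < 2 ^ l} = Pi\<^sub>E UNIV (\<lambda>_. {..<2^l})"
  by (auto simp: PiE_UNIV_domain Pi_def)

lemma dyadic_partition_finite: "finite (dyadic_partition l :: (real^'d) set set)"
  unfolding dyadic_partition_def dyadic_index_set by (intro finite_imageI finite_PiE) auto

lemma dyadic_partition_card: "card (dyadic_partition l :: (real^'d) set set) \<le> 2 ^ (CARD('d) * l)"
proof -
  have "card (dyadic_partition l :: (real^'d) set set) \<le> card (Pi\<^sub>E (UNIV::'d set) (\<lambda>_. {..<(2::nat)^l}))"
    unfolding dyadic_partition_def dyadic_index_set by (intro card_image_le finite_PiE) auto
  also have "\<dots> = (2^l) ^ CARD('d)" by (simp add: card_PiE)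
  also have "\<dots> = 2 ^ (CARD('d) * l)" by (simp add: power_mult[symmetric] mult.commute)
  finally show ?thesis .
qed

lemma sum_meas_le:
  fixes \<mu> :: "(real ^ 'd) measure"
  assumes P: "prob_space \<mu>" and S: "sets \<mu> = sets borel"
  shows "(\<Sum>F\<in>dyadic_partition l. measure \<mu> (scale_set n F \<inter> shell n)) \<le> measure \<mu> (shell n)"
proof -
  interpret prob_space \<mu> by (rule P)
  let ?A = "\<lambda>F. scale_set n F \<inter> shell n"
  have meas: "?A F \<in> sets \<mu>" if F: "F \<in> dyadic_partition l" for F
  proof -
    obtain k where "F = dyadic_cube l k" using F unfolding dyadic_partition_def by auto
    thus ?thesis unfolding S by (simp add: sets.Int scale_set_borel dyadic_cube_borel shell_borel)
  qed
  have disj: "disjoint_family_on ?A (dyadic_partition l)"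
    unfolding disjoint_family_on_def
  proof (intro ballI impI)
    fix F G assume FG: "F \<in> dyadic_partition l" "G \<in> dyadic_partition l" "F \<noteq> G"
    have "F \<inter> G = {}" by (rule dyadic_partition_disj[OF FG])
    hence "scale_set n F \<inter> scale_set n G = {}" unfolding scale_set_vimage by auto
    thus "?A F \<inter> ?A G = {}" by auto
  qed
  have "(\<Sum>F\<in>dyadic_partition l. measure \<mu> (?A F)) = measure \<mu> (\<Union>F\<in>dyadic_partition l. ?A F)"
    by (rule measure_finite_Union[symmetric]) (use dyadic_partition_finite meas disj in auto)
  also have "\<dots> \<le> measure \<mu> (shell n)"
    by (rule finite_measure_mono) (use shell_borel S in auto)
  finally show ?thesis .
qed

lemma shell_tail:
  fixes \<mu> :: "(real ^ 'd) measure" and q :: real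
  assumes P: "prob_space \<mu>" and S: "sets \<mu> = sets borel" and q: "0 < q"
    and I: "(\<integral>\<^sup>+ x. ennreal (norm x powr q) \<partial>\<mu>) < \<infinity>"
  shows "\<exists>K\<ge>1. \<forall>n. measure \<mu> (shell n) \<le> K * 2 powr (-q * real n)"
proof -
  interpret prob_space \<mu> by (rule P)
  define I where "I = enn2real (\<integral>\<^sup>+ x. ennreal (norm x powr q) \<partial>\<mu>)"
  have I0: "0 \<le> I" unfolding I_def by simp
  have Ie: "(\<integral>\<^sup>+ x. ennreal (norm x powr q) \<partial>\<mu>) = ennreal I"
    unfolding I_def using I by (simp add: ennreal_enn2real_if less_top)
  define K where "K = max 1 (I * 2 powr q)"
  have bound: "measure \<mu> (shell n) \<le> K * 2 powr (-q * real n)" for n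
  proof (cases "n = 0")
    case True
    thus ?thesis using prob_le_1[of "shell 0"] unfolding K_def by (simp add: le_max_iff_disj)
  next
    case False
    define r :: real where "r = 2 ^ (n - 1)"
    have r0: "0 < r" unfolding r_def by simp
    have sub: "r \<le> norm x" if "x \<in> shell n" for x
    proof -
      from that False have "x \<notin> half_open_cube r" unfolding shell_def r_def by auto
      then obtain i where "\<not> (- r < x $ i \<and> x $ i \<le> r)" unfolding half_open_cube_def by auto
      hence "r \<le> \<bar>x $ i\<bar>" by auto
      also have "\<dots> \<le> norm x" by (rule component_le_norm_cart)
      finally show ?thesis .
    qed
    have "(\<integral>\<^sup>+ x. ennreal (r powr q) * indicator (shell n) x \<partial>\<mu>) \<le> (\<integral>\<^sup>+ x. ennreal (norm x powr q) \<partial>\<mu>)"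
    proof (rule nn_integral_mono)
      fix x
      show "ennreal (r powr q) * indicator (shell n) x \<le> ennreal (norm x powr q)"
      proof (cases "x \<in> shell n")
        case True
        have "r powr q \<le> norm x powr q" using sub[OF True] r0 q by (intro powr_mono2) auto
        thus ?thesis using True by simp
      qed simp
    qed
    moreover have "(\<integral>\<^sup>+ x. ennreal (r powr q) * indicator (shell n) x \<partial>\<mu>) = ennreal (r powr q) * emeasure \<mu> (shell n)"
      by (rule nn_integral_cmult_indicator) (use shell_borel S in auto)
    ultimately have "ennreal (r powr q) * emeasure \<mu> (shell n) \<le> ennreal I"
      using Ie by simp
    hence "ennreal (r powr q * measure \<mu> (shell n)) \<le> ennreal I"
      by (simp add: emeasure_eq_measure ennreal_mult)
    hence "r powr q * measure \<mu> (shell n) \<le> I" using I0 by simp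
    hence "measure \<mu> (shell n) \<le> I / r powr q" using r0 by (simp add: field_simps)
    also have "I / r powr q = I * 2 powr q * 2 powr (-q * real n)"
    proof -
      have "r powr q = 2 powr (q * real n - q)" unfolding r_def using False
        by (simp add: powr_realpow[symmetric] powr_powr of_nat_diff algebra_simps)
      thus ?thesis by (simp add: powr_diff powr_minus divide_inverse powr_add[symmetric] algebra_simps)
    qed
    also have "\<dots> \<le> K * 2 powr (-q * real n)" unfolding K_def by (intro mult_right_mono) auto
    finally show ?thesis .
  qed
  show ?thesis by (intro exI[of _ K] conjI allI bound) (simp add: K_def)
qed

lemma sum_powr_le:
  fixes f :: "'a \<Rightarrow> real"
  assumes S: "finite S" and f: "\<And>i. i \<in> S \<Longrightarrow> 0 \<le> f i" and a0: "0 < \<alpha>" and a1: "\<alpha> < 1"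
  shows "(\<Sum>i\<in>S. f i powr \<alpha>) \<le> real (card S) powr (1 - \<alpha>) * (\<Sum>i\<in>S. f i) powr \<alpha>"
proof (cases "(\<Sum>i\<in>S. f i) = 0")
  case True
  hence "\<forall>i\<in>S. f i = 0" using sum_nonneg_eq_0_iff[OF S] f by blast
  thus ?thesis by simp
next
  case False
  define s where "s = (\<Sum>i\<in>S. f i)"
  have s0: "0 < s" using False f unfolding s_def by (metis sum_nonneg order_le_less)
  have Sne: "S \<noteq> {}" using False by auto
  define N where "N = real (card S)"
  have N0: "0 < N" unfolding N_def using S Sne by (simp add: card_gt_0_iff)
  define u where "u = s / N"
  have u0: "0 < u" unfolding u_def using s0 N0 by simp
  have each: "f i powr \<alpha> \<le> (\<alpha> * f i + (1 - \<alpha>) * u) * u powr (\<alpha> - 1)" if "i \<in> S" for i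
  proof (cases "f i = 0")
    case True
    thus ?thesis using a1 u0 by simp
  next
    case False
    hence fi: "0 < f i" using f[OF that] by simp
    have "f i powr \<alpha> * u powr (1 - \<alpha>) \<le> \<alpha> * f i + (1 - \<alpha>) * u"
      by (rule Youngs_inequality_0) (use a0 a1 fi u0 in auto)
    hence "f i powr \<alpha> * u powr (1 - \<alpha>) * u powr (\<alpha> - 1) \<le> (\<alpha> * f i + (1 - \<alpha>) * u) * u powr (\<alpha> - 1)"
      by (intro mult_right_mono) auto
    moreover have "u powr (1 - \<alpha>) * u powr (\<alpha> - 1) = 1" using u0 by (simp add: powr_add[symmetric])
    ultimately show ?thesis by (simp add: mult.assoc)
  qed
  have "(\<Sum>i\<in>S. f i powr \<alpha>) \<le> (\<Sum>i\<in>S. (\<alpha> * f i + (1 - \<alpha>) * u) * u powr (\<alpha> - 1))"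
    by (rule sum_mono) (rule each)
  also have "\<dots> = (\<alpha> * s + (1 - \<alpha>) * N * u) * u powr (\<alpha> - 1)"
    unfolding s_def N_def by (simp add: sum_distrib_right sum.distrib sum_distrib_left[symmetric] mult_ac)
  also have "\<dots> = s * u powr (\<alpha> - 1)" unfolding u_def using N0 by (simp add: algebra_simps)
  also have "\<dots> = N powr (1 - \<alpha>) * s powr \<alpha>"
  proof -
    have "u powr (\<alpha> - 1) = s powr (\<alpha> - 1) / N powr (\<alpha> - 1)"
      unfolding u_def using s0 N0 by (simp add: powr_divide)
    moreover have "N powr (1 - \<alpha>) = 1 / N powr (\<alpha> - 1)" using powr_minus_divide[of N "\<alpha> - 1"] by simp
    ultimately have "u powr (\<alpha> - 1) = s powr (\<alpha> - 1) * N powr (1 - \<alpha>)" by simp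
    moreover have "s * s powr (\<alpha> - 1) = s powr \<alpha>" using s0 by (simp add: powr_diff)
    ultimately show ?thesis by (simp add: mult_ac)
  qed
  finally show ?thesis unfolding N_def s_def .
qed

lemma log_if_bound:
  fixes T a :: real assumes T: "2 < T" and a: "0 \<le> a"
  shows "(if P then 1 + a * ln T else 1) \<le> (1 / ln 2 + a) * (if P then ln T else 1)"
proof -
  have l2: "0 < ln (2::real)" "ln (2::real) \<le> 1" using ln_le_minus_one[of 2] by auto
  have i1: "1 \<le> 1 / ln (2::real)" using l2 by simp
  have lT: "ln 2 \<le> ln T" using T by simp
  show ?thesis
  proof (cases P)
    case True
    have "1 \<le> ln T / ln 2" using lT l2 by simp
    hence "1 + a * ln T \<le> ln T / ln 2 + a * ln T" by simp
    thus ?thesis using True by (simp add: distrib_right)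
  next
    case False
    have "1 \<le> 1 / ln 2 + a" using i1 a by linarith
    thus ?thesis using False by simp
  qed
qed

lemma term_bound:
  fixes \<mu> :: "(real ^ 'd) measure" and \<epsilon> \<alpha> :: real
  assumes P: "prob_space \<mu>" and S: "sets \<mu> = sets borel" and e: "0 < \<epsilon>" and a0: "0 < \<alpha>" and a1: "\<alpha> < 1"
  shows "(\<Sum>F\<in>dyadic_partition l. min (measure \<mu> (scale_set n F \<inter> shell n))
               (\<epsilon> * measure \<mu> (scale_set n F \<inter> shell n) powr \<alpha>))
     \<le> min (measure \<mu> (shell n)) (\<epsilon> * 2 powr (real CARD('d) * (1 - \<alpha>) * real l) * measure \<mu> (shell n) powr \<alpha>)"
proof -
  let ?m = "\<lambda>F. measure \<mu> (scale_set n F \<inter> shell n)"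
  let ?P = "dyadic_partition l :: (real^'d) set set"
  have s1: "(\<Sum>F\<in>?P. min (?m F) (\<epsilon> * ?m F powr \<alpha>)) \<le> (\<Sum>F\<in>?P. ?m F)"
    by (rule sum_mono) simp
  also have "\<dots> \<le> measure \<mu> (shell n)" by (rule sum_meas_le[OF P S])
  finally have 1: "(\<Sum>F\<in>?P. min (?m F) (\<epsilon> * ?m F powr \<alpha>)) \<le> measure \<mu> (shell n)" .
  have "(\<Sum>F\<in>?P. min (?m F) (\<epsilon> * ?m F powr \<alpha>)) \<le> (\<Sum>F\<in>?P. \<epsilon> * ?m F powr \<alpha>)"
    by (rule sum_mono) simp
  also have "\<dots> = \<epsilon> * (\<Sum>F\<in>?P. ?m F powr \<alpha>)" by (simp add: sum_distrib_left)
  also have "(\<Sum>F\<in>?P. ?m F powr \<alpha>) \<le> real (card ?P) powr (1 - \<alpha>) * (\<Sum>F\<in>?P. ?m F) powr \<alpha>"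
    by (rule sum_powr_le) (use dyadic_partition_finite a0 a1 in auto)
  also have "real (card ?P) powr (1 - \<alpha>) \<le> 2 powr (real CARD('d) * (1 - \<alpha>) * real l)"
  proof -
    have "real (card ?P) \<le> 2 ^ (CARD('d) * l)"
      using dyadic_partition_card[of l, where 'd='d] by (metis of_nat_le_iff of_nat_numeral of_nat_power)
    hence "real (card ?P) powr (1 - \<alpha>) \<le> (2 ^ (CARD('d) * l)) powr (1 - \<alpha>)"
      using a1 by (intro powr_mono2) auto
    also have "(2::real) ^ (CARD('d) * l) = 2 powr (real (CARD('d) * l))" using powr_realpow[of 2 "CARD('d) * l"] by simp
    also have "(2 powr (real (CARD('d) * l))) powr (1 - \<alpha>) = 2 powr (real CARD('d) * (1 - \<alpha>) * real l)"
      by (simp add: powr_powr mult_ac)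
    finally show ?thesis .
  qed
  also have "(\<Sum>F\<in>?P. ?m F) powr \<alpha> \<le> measure \<mu> (shell n) powr \<alpha>"
    using sum_meas_le[OF P S, of n l] a0 by (intro powr_mono2) (auto intro: sum_nonneg)
  finally have 2: "(\<Sum>F\<in>?P. min (?m F) (\<epsilon> * ?m F powr \<alpha>))
      \<le> \<epsilon> * (2 powr (real CARD('d) * (1 - \<alpha>) * real l) * measure \<mu> (shell n) powr \<alpha>)"
    using e by (simp add: mult_left_mono mult_right_mono)
  show ?thesis using 1 2 by (simp add: mult_ac)
qed

lemma ex_aux:
  fixes g a m :: real assumes "g < 1" "a < 1"
  shows "-1/2 * ((1 - g) / (1 - a) * ((1 - m) / (1 - g))) = - (1 - m) / (2 * (1 - a))"
proof -
  have ng: "1 - g \<noteq> 0" using assms by simp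
  have "(1 - g) / (1 - a) * ((1 - m) / (1 - g)) = ((1 - m) * (1 - g)) / ((1 - a) * (1 - g))"
    by (simp add: mult.commute)
  also have "\<dots> = (1 - m) / (1 - a)" using ng by (rule mult_divide_mult_cancel_right)
  finally have X: "(1 - g) / (1 - a) * ((1 - m) / (1 - g)) = (1 - m) / (1 - a)" .
  have na: "1 - a \<noteq> 0" "2 - 2 * a \<noteq> 0" using assms by auto
  have "-1/2 * ((1 - m) / (1 - a)) = - (1 - m) / (2 * (1 - a))" using na by (simp add: field_simps)
  thus ?thesis unfolding X .
qed

theorem lemma3p1:
  fixes \<mu> :: "(real ^ 'd) measure" and p q \<alpha> :: real
  assumes "prob_space \<mu>" and "sets \<mu> = sets borel"
    and "p > 0" and "q > p"
    and "(\<integral>\<^sup>+ x. ennreal (norm x powr q) \<partial>\<mu>) < \<infinity>"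
    and "0 < \<alpha>" and "\<alpha> < 1"
  shows "\<exists>C>0. \<forall>T>2.
    K_alpha \<mu> p \<alpha> T \<le> ennreal (C *
      T powr (- (1 - max (max \<alpha> (1 - p / real CARD('d))) (p / q)) / (2 * (1 - \<alpha>))) *
      (if max \<alpha> (1 - p / real CARD('d)) * q = p then ln T else 1) *
      (if p = (1 - \<alpha>) * real CARD('d) then ln T else 1))"
proof -
  note P = assms(1) and S = assms(2) and p = assms(3) and q = assms(4) and I = assms(5)
    and a0 = assms(6) and a1 = assms(7)
  interpret prob_space \<mu> by (rule P)
  define d where "d = real CARD('d)"
  have d0: "0 < d" unfolding d_def by simp
  define \<gamma> where "\<gamma> = max \<alpha> (1 - p/d)"
  have g0: "0 < \<gamma>" unfolding \<gamma>_def using a0 by simp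
  have g1: "\<gamma> < 1" unfolding \<gamma>_def using a1 p d0 by simp
  obtain C1 where C1: "C1 > 0" and HC1: "\<And>\<epsilon> M. 0 < \<epsilon> \<Longrightarrow> \<epsilon> < 1 \<Longrightarrow> 0 \<le> M \<Longrightarrow> M \<le> 1 \<Longrightarrow>
     summable (\<lambda>l. 2 powr (-p * real l) * min M (\<epsilon> * 2 powr (d * (1 - \<alpha>) * real l) * M powr \<alpha>)) \<and>
     (\<Sum>l. 2 powr (-p * real l) * min M (\<epsilon> * 2 powr (d * (1 - \<alpha>) * real l) * M powr \<alpha>))
       \<le> C1 * (if p = d * (1 - \<alpha>) then 1 + ln (1/\<epsilon>) else 1) *
          min M (\<epsilon> powr ((1 - \<gamma>) / (1 - \<alpha>)) * M powr \<gamma>)"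
    using lsum_bound[OF p d0 a0 a1] unfolding \<gamma>_def by blast
  obtain K where K1: "K \<ge> 1" and HK: "\<And>n. measure \<mu> (shell n) \<le> K * 2 powr (-q * real n)"
    using shell_tail[OF P S _ I] p q by (metis order.strict_trans)
  obtain C2 where C2: "C2 > 0" and HC2: "\<And>E M. 0 < E \<Longrightarrow> E < 1 \<Longrightarrow> (\<forall>n. 0 \<le> M n \<and> M n \<le> K * 2 powr (-q * real n)) \<Longrightarrow>
     summable (\<lambda>n. 2 powr (p * real n) * min (M n) (E * M n powr \<gamma>)) \<and>
     (\<Sum>n. 2 powr (p * real n) * min (M n) (E * M n powr \<gamma>))
       \<le> C2 * E powr ((1 - max \<gamma> (p/q)) / (1 - \<gamma>)) * (if \<gamma> * q = p then 1 + ln (1/E) else 1)"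
    using nsum_bound[OF p q g0 g1 K1] by blast
  define c0 :: real where "c0 = 1 / ln 2 + 1/2"
  define c1 :: real where "c1 = 1 / ln 2 + (1 - \<gamma>) / (1 - \<alpha>) / 2"
  have c0p: "0 < c0" unfolding c0_def by (simp add: add_pos_pos)
  have c1p: "0 < c1" unfolding c1_def using g1 a1 by (simp add: add_pos_nonneg)
  show ?thesis
  proof (intro exI[of _ "C1 * C2 * c0 * c1"] conjI allI impI)
    show "0 < C1 * C2 * c0 * c1" using C1 C2 c0p c1p by simp
    fix T :: real assume T: "2 < T"
    define \<epsilon> where "\<epsilon> = T powr (-1/2)"
    have e0: "0 < \<epsilon>" unfolding \<epsilon>_def using T by simp
    have e1: "\<epsilon> < 1"
    proof -
      have "T powr (-1/2) < T powr 0" by (rule powr_less_mono) (use T in auto)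
      thus ?thesis unfolding \<epsilon>_def using T by simp
    qed
    have le: "ln (1/\<epsilon>) = 1/2 * ln T" unfolding \<epsilon>_def using T by (simp add: ln_div ln_powr)
    define M where "M n = measure \<mu> (shell n)" for n
    have M01: "0 \<le> M n" "M n \<le> 1" for n unfolding M_def by (auto simp: prob_le_1)
    define E where "E = \<epsilon> powr ((1 - \<gamma>) / (1 - \<alpha>))"
    have ex0: "0 < (1 - \<gamma>) / (1 - \<alpha>)" using g1 a1 by simp
    have E0: "0 < E" unfolding E_def using e0 by simp
    have E1: "E < 1" unfolding E_def using e0 e1 ex0 powr_less_mono2[OF ex0, of \<epsilon> 1] by simp
    have lE: "ln (1/E) = (1 - \<gamma>) / (1 - \<alpha>) / 2 * ln T"
    proof -
      have "ln (1/E) = - ((1 - \<gamma>) / (1 - \<alpha>) * ln \<epsilon>)" unfolding E_def using e0 by (simp add: ln_div ln_powr)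
      also have "ln \<epsilon> = - (1/2 * ln T)" using le e0 by (simp add: ln_div)
      finally show ?thesis by simp
    qed
    define h where "h n l = 2 powr (-p * real l) * min (M n) (\<epsilon> * 2 powr (d * (1 - \<alpha>) * real l) * M n powr \<alpha>)" for n l
    define L2 where "L2 = (if p = d * (1 - \<alpha>) then 1 + ln (1/\<epsilon>) else 1)"
    define L1 where "L1 = (if \<gamma> * q = p then 1 + ln (1/E) else 1)"
    have le0: "0 < ln (1/\<epsilon>)" using e0 e1 by (simp add: ln_div)
    have lE0: "0 < ln (1/E)" using E0 E1 by (simp add: ln_div)
    have L2p: "0 \<le> L2" unfolding L2_def using le0 by simp
    have L1p: "0 \<le> L1" unfolding L1_def using lE0 by simp
    have hs: "summable (h n)" and hb: "suminf (h n) \<le> C1 * L2 * min (M n) (E * M n powr \<gamma>)" for n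
      using HC1[OF e0 e1 M01(1)[of n] M01(2)[of n]] unfolding h_def L2_def E_def by auto
    have h0: "0 \<le> h n l" for n l unfolding h_def using M01[of n] e0 by simp
    define f where "f n = 2 powr (p * real n) * min (M n) (E * M n powr \<gamma>)" for n
    have f0: "0 \<le> f n" for n unfolding f_def using M01[of n] E0 by simp
    have fs: "summable f" and fb: "suminf f \<le> C2 * E powr ((1 - max \<gamma> (p/q)) / (1 - \<gamma>)) * L1"
      using HC2[OF E0 E1, of M] M01 HK unfolding f_def L1_def M_def by auto
    have tb: "2 powr (p * real n) * 2 powr (- p * real l) *
        (\<Sum>F\<in>dyadic_partition l. min (measure \<mu> (scale_set n F \<inter> shell n))
               (T powr (-1/2) * measure \<mu> (scale_set n F \<inter> shell n) powr \<alpha>))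
      \<le> 2 powr (p * real n) * h n l" for n l
    proof -
      have "(\<Sum>F\<in>dyadic_partition l. min (measure \<mu> (scale_set n F \<inter> shell n))
               (\<epsilon> * measure \<mu> (scale_set n F \<inter> shell n) powr \<alpha>))
          \<le> min (M n) (\<epsilon> * 2 powr (d * (1 - \<alpha>) * real l) * M n powr \<alpha>)"
        unfolding M_def d_def by (rule term_bound[OF P S e0 a0 a1])
      hence "2 powr (- p * real l) * (\<Sum>F\<in>dyadic_partition l. min (measure \<mu> (scale_set n F \<inter> shell n))
               (\<epsilon> * measure \<mu> (scale_set n F \<inter> shell n) powr \<alpha>)) \<le> h n l"
        unfolding h_def by (intro mult_left_mono) auto
      hence "2 powr (p * real n) * (2 powr (- p * real l) * (\<Sum>F\<in>dyadic_partition l. min (measure \<mu> (scale_set n F \<inter> shell n))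
               (\<epsilon> * measure \<mu> (scale_set n F \<inter> shell n) powr \<alpha>))) \<le> 2 powr (p * real n) * h n l"
        by (intro mult_left_mono) auto
      thus ?thesis unfolding \<epsilon>_def by (simp add: mult.assoc)
    qed
    have "K_alpha \<mu> p \<alpha> T \<le> (\<Sum>n. \<Sum>l. ennreal (2 powr (p * real n) * h n l))"
      unfolding K_alpha_def
      by (intro suminf_le summableI allI ennreal_leI tb)
    also have "\<dots> = (\<Sum>n. ennreal (2 powr (p * real n) * suminf (h n)))"
    proof (intro suminf_cong)
      fix n
      have "(\<Sum>l. ennreal (2 powr (p * real n) * h n l)) = ennreal (\<Sum>l. 2 powr (p * real n) * h n l)"
        by (rule suminf_ennreal2) (use h0 hs in \<open>auto intro: summable_mult\<close>)
      also have "(\<Sum>l. 2 powr (p * real n) * h n l) = 2 powr (p * real n) * suminf (h n)"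
        by (rule suminf_mult[OF hs])
      finally show "(\<Sum>l. ennreal (2 powr (p * real n) * h n l)) = ennreal (2 powr (p * real n) * suminf (h n))" .
    qed
    also have "\<dots> \<le> (\<Sum>n. ennreal ((C1 * L2) * f n))"
    proof (intro suminf_le summableI allI ennreal_leI)
      fix n
      have "2 powr (p * real n) * suminf (h n) \<le> 2 powr (p * real n) * (C1 * L2 * min (M n) (E * M n powr \<gamma>))"
        by (intro mult_left_mono hb) auto
      thus "2 powr (p * real n) * suminf (h n) \<le> C1 * L2 * f n" unfolding f_def by (simp add: mult_ac)
    qed
    also have "\<dots> = ennreal ((C1 * L2) * suminf f)"
    proof -
      have "(\<Sum>n. ennreal ((C1 * L2) * f n)) = ennreal (\<Sum>n. (C1 * L2) * f n)"
        by (rule suminf_ennreal2) (use f0 fs C1 L2p in \<open>auto intro: summable_mult\<close>)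
      also have "(\<Sum>n. (C1 * L2) * f n) = (C1 * L2) * suminf f" by (rule suminf_mult[OF fs])
      finally show ?thesis .
    qed
    also have "\<dots> \<le> ennreal (C1 * C2 * c0 * c1 *
      T powr (- (1 - max \<gamma> (p / q)) / (2 * (1 - \<alpha>))) *
      (if \<gamma> * q = p then ln T else 1) *
      (if p = (1 - \<alpha>) * d then ln T else 1))"
    proof (rule ennreal_leI)
      have "(C1 * L2) * suminf f \<le> (C1 * L2) * (C2 * E powr ((1 - max \<gamma> (p/q)) / (1 - \<gamma>)) * L1)"
        using C1 L2p fb by (intro mult_left_mono) auto
      also have "E powr ((1 - max \<gamma> (p/q)) / (1 - \<gamma>)) = T powr (- (1 - max \<gamma> (p / q)) / (2 * (1 - \<alpha>)))"
      proof -
        have ex: "-1/2 * ((1 - \<gamma>) / (1 - \<alpha>) * ((1 - max \<gamma> (p/q)) / (1 - \<gamma>))) = - (1 - max \<gamma> (p / q)) / (2 * (1 - \<alpha>))"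
          by (rule ex_aux[OF g1 a1])
        have "E powr ((1 - max \<gamma> (p/q)) / (1 - \<gamma>)) = T powr (-1/2 * ((1 - \<gamma>) / (1 - \<alpha>) * ((1 - max \<gamma> (p/q)) / (1 - \<gamma>))))"
          unfolding E_def \<epsilon>_def by (simp only: powr_powr mult.assoc)
        thus ?thesis by (simp only: ex)
      qed
      also have "(C1 * L2) * (C2 * T powr (- (1 - max \<gamma> (p / q)) / (2 * (1 - \<alpha>))) * L1)
          = C1 * C2 * T powr (- (1 - max \<gamma> (p / q)) / (2 * (1 - \<alpha>))) * (L1 * L2)" by (simp add: mult_ac)
      also have "L1 * L2 \<le> (c1 * (if \<gamma> * q = p then ln T else 1)) * (c0 * (if p = (1 - \<alpha>) * d then ln T else 1))"
      proof (intro mult_mono L1p L2p)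
        show "L1 \<le> c1 * (if \<gamma> * q = p then ln T else 1)"
          unfolding L1_def c1_def lE using log_if_bound[OF T, of "(1 - \<gamma>) / (1 - \<alpha>) / 2" "\<gamma> * q = p"] g1 a1
          by simp
        show "L2 \<le> c0 * (if p = (1 - \<alpha>) * d then ln T else 1)"
          unfolding L2_def c0_def le using log_if_bound[OF T, of "1/2" "p = (1 - \<alpha>) * d"]
          by (simp add: mult.commute)
        show "0 \<le> c1 * (if \<gamma> * q = p then ln T else 1)" using c1p T by simp
      qed
      finally have X: "(C1 * L2) * suminf f \<le> C1 * C2 * T powr (- (1 - max \<gamma> (p / q)) / (2 * (1 - \<alpha>))) *
         ((c1 * (if \<gamma> * q = p then ln T else 1)) * (c0 * (if p = (1 - \<alpha>) * d then ln T else 1)))"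
        using C1 C2 by (simp add: mult_left_mono)
      have eq: "C1 * C2 * T powr (- (1 - max \<gamma> (p / q)) / (2 * (1 - \<alpha>))) *
         ((c1 * (if \<gamma> * q = p then ln T else 1)) * (c0 * (if p = (1 - \<alpha>) * d then ln T else 1)))
        = C1 * C2 * c0 * c1 *
        T powr (- (1 - max \<gamma> (p / q)) / (2 * (1 - \<alpha>))) *
        (if \<gamma> * q = p then ln T else 1) * (if p = (1 - \<alpha>) * d then ln T else 1)"
        by (simp only: mult_ac)
      show "(C1 * L2) * suminf f \<le> C1 * C2 * c0 * c1 *
        T powr (- (1 - max \<gamma> (p / q)) / (2 * (1 - \<alpha>))) *
        (if \<gamma> * q = p then ln T else 1) * (if p = (1 - \<alpha>) * d then ln T else 1)"
        using X unfolding eq .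
    qed
    finally have fin: "K_alpha \<mu> p \<alpha> T \<le> ennreal (C1 * C2 * c0 * c1 *
      T powr (- (1 - max \<gamma> (p / q)) / (2 * (1 - \<alpha>))) *
      (if \<gamma> * q = p then ln T else 1) *
      (if p = (1 - \<alpha>) * d then ln T else 1))" .
    have dd: "real CARD('d) = d" by (simp add: d_def)
    show "K_alpha \<mu> p \<alpha> T \<le> ennreal (C1 * C2 * c0 * c1 *
      T powr (- (1 - max (max \<alpha> (1 - p / real CARD('d))) (p / q)) / (2 * (1 - \<alpha>))) *
      (if max \<alpha> (1 - p / real CARD('d)) * q = p then ln T else 1) *
      (if p = (1 - \<alpha>) * real CARD('d) then ln T else 1))"
      unfolding dd \<gamma>_def[symmetric] by (rule fin)
  qed
qed


end
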